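(* Let $\Omega\subset\mathbb{R}^N$ be a bounded domain with $C^1$ boundary and $v_0\in C(\overline\Omega)$. Define $v(x):=v_0(x)$ for $x\in\overline\Omega$ and $$v(x):=\frac{\int_{(0,1)}c_{N,s}\int_\Omega\frac{v_0(y)}{|x-y|^{N+2s}}dy\,d\mu(s)}{\int_{(0,1)}c_{N,s}\int_\Omega\frac{1}{|x-y|^{N+2s}}dy\,d\mu(s)}\quad\text{for }x\in\mathbb{R}^N\setminus\overline\Omega.$$ Then $v\in C(\mathbb{R}^N)$, $v=v_0$ on $\overline\Omega$, and $\int_{(0,1)}\mathscr N_sv(x)\,d\mu(s)=0$ for every $x\in\mathbb{R}^N\setminus\overline\Omega$.
   Context: $\mu$ is a nonnegative, nontrivial finite Borel measure on $(0,1)$. For $s\in(0,1)$, $c_{N,s}:=-\frac{2^{2s-1}\Gamma(\frac{N+2s}{2})}{\pi^{N/2}\Gamma(-s)}>0$. For $x\in\mathbb{R}^N\setminus\overline\Omega$, $\mathscr N_sv(x):=c_{N,s}\int_\Omega\frac{v(x)-v(y)}{|x-y|^{N+2s}}dy$. *)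

theory Defs
  imports "HOL-Analysis.Analysis"
begin

definition cNs :: "nat \<Rightarrow> real \<Rightarrow> real" where
  "cNs n s = - (2 powr (2 * s - 1) * Gamma ((real n + 2 * s) / 2))
                / (pi powr (real n / 2) * Gamma (- s))"

definition bounded_domain :: "'n::euclidean_space set \<Rightarrow> bool" where
  "bounded_domain \<Omega> \<longleftrightarrow> open \<Omega> \<and> connected \<Omega> \<and> \<Omega> \<noteq> {} \<and> bounded \<Omega>"

text \<open>C^1 boundary: near every boundary point, after choosing a unit direction e,
  \<Omega> is the supergraph (in direction e) of a C^1 function defined on the hyperplane
  orthogonal to e (represented as a C^1 function on the whole space depending only on
  the component orthogonal to e).\<close>
definition C1_boundary :: "'n::euclidean_space set \<Rightarrow> bool" where
  "C1_boundary \<Omega> \<longleftrightarrow>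
     (\<forall>p\<in>frontier \<Omega>. \<exists>r>0. \<exists>e::'n. \<exists>g::'n \<Rightarrow> real. \<exists>Dg::'n \<Rightarrow> ('n \<Rightarrow>\<^sub>L real).
        norm e = 1 \<and>
        (\<forall>x. g x = g (x - (x \<bullet> e) *\<^sub>R e)) \<and>
        (\<forall>x. (g has_derivative blinfun_apply (Dg x)) (at x)) \<and>
        continuous_on UNIV Dg \<and>
        \<Omega> \<inter> ball p r = {x \<in> ball p r. x \<bullet> e > g x})"

definition ext_v :: "'n::euclidean_space set \<Rightarrow> real measure \<Rightarrow> ('n \<Rightarrow> real) \<Rightarrow> 'n \<Rightarrow> real" where
  "ext_v \<Omega> \<mu> v0 x =
     (if x \<in> closure \<Omega> then v0 x
      else (LINT s:{0<..<1}|\<mu>. cNs DIM('n) s *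
               (LINT y:\<Omega>|lborel. v0 y / norm (x - y) powr (real DIM('n) + 2 * s)))
         / (LINT s:{0<..<1}|\<mu>. cNs DIM('n) s *
               (LINT y:\<Omega>|lborel. 1 / norm (x - y) powr (real DIM('n) + 2 * s))))"

definition nonlocal_neumann :: "'n::euclidean_space set \<Rightarrow> real \<Rightarrow> ('n \<Rightarrow> real) \<Rightarrow> 'n \<Rightarrow> real" where
  "nonlocal_neumann \<Omega> s v x =
     cNs DIM('n) s * (LINT y:\<Omega>|lborel. (v x - v y) / norm (x - y) powr (real DIM('n) + 2 * s))"

end

theory Submission
  imports Defs
begin

lemma cNs_alt: "cNs n s = - (2 powr (2 * s - 1) * Gamma ((real n + 2 * s) / 2) * rGamma (- s)) / pi powr (real n / 2)"
  unfolding cNs_def Gamma_def[of "-s"]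
  by (cases "rGamma (-s) = 0") (simp_all add: field_simps)

lemma not_nonpos_int_pos: "(x::real) > 0 \<Longrightarrow> x \<notin> \<int>\<^sub>\<le>\<^sub>0"
  by (auto elim!: nonpos_Ints_cases)

lemma neg_not_int: assumes "0 < (s::real)" "s < 1" shows "- s \<notin> \<int>\<^sub>\<le>\<^sub>0"
proof
  assume "- s \<in> \<int>\<^sub>\<le>\<^sub>0"
  then obtain m where m: "- s = of_int m" by (auto elim!: nonpos_Ints_cases)
  then have "-1 < m" "m < 0" using assms by linarith+
  then show False by simp
qed

lemma cNs_cont: "n \<ge> 1 \<Longrightarrow> continuous_on {0..1} (cNs n)"
  unfolding cNs_alt
  apply (intro continuous_at_imp_continuous_on ballI continuous_intros not_nonpos_int_pos)
  apply simp_all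
  done

lemma cNs_pos: assumes "n \<ge> 1" "0 < s" "s < 1" shows "cNs n s > 0"
proof -
  have e: "Gamma (-s + 1) = (-s) * Gamma (-s)"
    by (rule Gamma_plus1) (use assms neg_not_int in auto)
  have p: "Gamma (-s + 1) > 0" using assms by auto
  have g: "Gamma (-s) < 0"
  proof (rule ccontr)
    assume "\<not> Gamma (-s) < 0"
    then have "- s * Gamma (-s) \<le> 0" using assms by (intro mult_nonpos_nonneg) auto
    then show False using e p by simp
  qed
  have "Gamma ((real n + 2 * s) / 2) > 0" using assms by auto
  then show ?thesis using g unfolding cNs_def
    by (intro divide_neg_neg mult_pos_neg) auto
qed
lemma cNs_bdd: "n \<ge> 1 \<Longrightarrow> \<exists>W. \<forall>s\<in>{0..1}. \<bar>cNs n s\<bar> \<le> W"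
proof -
  assume "n \<ge> 1"
  then have "bounded (cNs n ` {0..1})"
    by (intro compact_imp_bounded compact_continuous_image cNs_cont) auto
  then obtain W where "\<forall>y\<in>cNs n ` {0..1}. norm y \<le> W" by (auto simp: bounded_iff)
  then show ?thesis by auto
qed

lemma set_integrable_bdd:
  fixes f :: "'a \<Rightarrow> real"
  assumes "A \<in> sets M" "emeasure M A < \<infinity>" "(\<lambda>x. indicator A x * f x) \<in> borel_measurable M"
    "\<And>x. x\<in>A \<Longrightarrow> \<bar>f x\<bar> \<le> B"
  shows "set_integrable M A f"
  unfolding set_integrable_def
  by (rule integrableI_bounded_set[where A=A and B=B]) (use assms in \<open>auto simp: indicator_def\<close>)

lemma set_integral_abs_bound:
  fixes f :: "'a \<Rightarrow> real"
  assumes "set_integrable M A f" "A \<in> sets M" "emeasure M A < \<infinity>" "\<And>x. x\<in>A \<Longrightarrow> \<bar>f x\<bar> \<le> B"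
  shows "\<bar>LINT x:A|M. f x\<bar> \<le> B * measure M A"
proof -
  have "\<bar>LINT x:A|M. f x\<bar> \<le> (LINT x:A|M. \<bar>f x\<bar>)" using set_integral_norm_bound[OF assms(1)] by simp
  also have "\<dots> \<le> (LINT x:A|M. B)"
  proof (rule set_integral_mono)
    show "set_integrable M A (\<lambda>x. \<bar>f x\<bar>)" using assms(1) by (rule set_integrable_abs)
    show "set_integrable M A (\<lambda>x. B)"
      by (rule set_integrable_bdd[where B="\<bar>B\<bar>"]) (use assms in auto)
  qed (use assms in auto)
  also have "\<dots> = B * measure M A" using assms by (simp add: set_integral_const)
  finally show ?thesis .
qed

lemma kernel_bound:
  fixes d u a b :: real
  assumes "0 < d" "d \<le> u" "0 \<le> a" "a \<le> b"
  shows "1 / u powr a \<le> max 1 ((1/d) powr b)"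
proof -
  have "u powr a \<ge> d powr a" using assms by (intro powr_mono2) auto
  then have "1 / u powr a \<le> 1 / d powr a" using assms by (intro divide_left_mono) auto
  also have "\<dots> = (1/d) powr a" using assms by (simp add: powr_divide)
  also have "\<dots> \<le> max 1 ((1/d) powr b)"
  proof (cases "1/d \<ge> 1")
    case True then show ?thesis using assms by (intro max.coboundedI2 powr_mono) auto
  next
    case False
    then have "(1/d) powr a \<le> (1/d) powr 0" using assms by (intro powr_mono') auto
    then show ?thesis using assms by simp
  qed
  finally show ?thesis .
qed

definition KI :: "'n::euclidean_space set \<Rightarrow> ('n \<Rightarrow> real) \<Rightarrow> 'n \<Rightarrow> real \<Rightarrow> real" where
  "KI \<Omega> f x s = (LINT y:\<Omega>|lborel. f y / norm (x - y) powr (real DIM('n) + 2 * s))"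

definition KJ :: "'n::euclidean_space set \<Rightarrow> real measure \<Rightarrow> ('n \<Rightarrow> real) \<Rightarrow> 'n \<Rightarrow> real" where
  "KJ \<Omega> \<mu> f x = (LINT s:{0<..<1}|\<mu>. cNs DIM('n) s * KI \<Omega> f x s)"

lemma ext_v_eq: "ext_v \<Omega> \<mu> v0 x = (if x \<in> closure \<Omega> then v0 x else KJ \<Omega> \<mu> v0 x / KJ \<Omega> \<mu> (\<lambda>_. 1) x)"
  by (simp add: ext_v_def KJ_def KI_def)

lemma dist_away:
  fixes \<Omega> :: "'n::euclidean_space set"
  assumes "x \<notin> closure \<Omega>"
  shows "\<exists>d>0. \<forall>x'\<in>ball x d. \<forall>y\<in>\<Omega>. d \<le> norm (x' - y)"
proof -
  obtain e where e: "e > 0" "ball x e \<subseteq> - closure \<Omega>"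
    using open_contains_ball assms by (metis ComplI open_Compl closed_closure)
  have "\<forall>x'\<in>ball x (e/2). \<forall>y\<in>\<Omega>. e/2 \<le> norm (x' - y)"
  proof (intro ballI)
    fix x' y assume x': "x' \<in> ball x (e/2)" and y: "y \<in> \<Omega>"
    have "y \<notin> ball x e" using e y closure_subset[of \<Omega>] by blast
    then have "e \<le> norm (x - y)" by (simp add: dist_norm)
    moreover have "norm (x - x') < e/2" using x' by (simp add: dist_norm)
    moreover have "norm (x - y) \<le> norm (x - x') + norm (x' - y)" by (rule norm_diff_triangle_le) auto
    ultimately show "e/2 \<le> norm (x' - y)" by linarith
  qed
  then show ?thesis using e by (intro exI[of _ "e/2"]) auto
qed

lemma cont_kernel_joint:
  fixes \<Omega> :: "'n::euclidean_space set"
  assumes "x \<notin> closure \<Omega>" "continuous_on \<Omega> f"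
  shows "continuous_on (UNIV \<times> \<Omega>) (\<lambda>p. f (snd p) / norm (x - snd p) powr (real DIM('n) + 2 * fst p))"
proof -
  have ne: "\<forall>p\<in>UNIV \<times> \<Omega>. norm (x - snd p) > 0" using assms closure_subset by force
  have fc: "continuous_on (UNIV \<times> \<Omega>) (\<lambda>p. f (snd p))"
    by (rule continuous_on_compose2[OF assms(2) continuous_on_snd]) auto
  show ?thesis
    using ne by (intro continuous_intros fc) auto
qed

lemma meas_kernel_y:
  fixes \<Omega> :: "'n::euclidean_space set"
  assumes "open \<Omega>" "x \<notin> closure \<Omega>" "continuous_on \<Omega> f"
  shows "(\<lambda>y. indicator \<Omega> y * (f y / norm (x - y) powr a)) \<in> borel_measurable lborel"
proof -
  have ne: "\<forall>y\<in>\<Omega>. norm (x - y) > 0" using assms closure_subset by force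
  have "continuous_on \<Omega> (\<lambda>y. f y / norm (x - y) powr a)"
    using ne by (intro continuous_intros assms) auto
  then have "(\<lambda>y. indicator \<Omega> y *\<^sub>R (f y / norm (x - y) powr a)) \<in> borel_measurable borel"
    using assms by (intro borel_measurable_continuous_on_indicator) auto
  then show ?thesis by simp
qed

lemma meas_kernel_s:
  fixes \<Omega> :: "'n::euclidean_space set"
  assumes "open \<Omega>" "x \<notin> closure \<Omega>" "continuous_on \<Omega> f"
  shows "(\<lambda>s. KI \<Omega> f x s) \<in> borel_measurable borel"
proof -
  have "(\<lambda>p. indicator (UNIV \<times> \<Omega>) p *\<^sub>R (f (snd p) / norm (x - snd p) powr (real DIM('n) + 2 * fst p)))
      \<in> borel_measurable borel"
    using assms by (intro borel_measurable_continuous_on_indicator cont_kernel_joint borel_open open_Times) auto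
  then have "(\<lambda>(s, y). indicator \<Omega> y *\<^sub>R (f y / norm (x - y) powr (real DIM('n) + 2 * s)))
      \<in> borel_measurable (borel \<Otimes>\<^sub>M lborel)"
    by (subst measurable_cong_sets[OF sets_pair_measure_cong[OF refl sets_lborel] refl])
       (simp add: borel_prod indicator_times split_beta')
  from lborel.borel_measurable_lebesgue_integral[OF this]
  show ?thesis unfolding KI_def set_lebesgue_integral_def by simp
qed

lemma cone_balls:
  fixes \<Omega> :: "'n::euclidean_space set" and e :: 'n and g :: "'n \<Rightarrow> real"
  assumes op: "open \<Omega>" and p: "p \<in> frontier \<Omega>" and r: "r > 0" and e: "norm e = 1"
    and gproj: "\<forall>x. g x = g (x - (x \<bullet> e) *\<^sub>R e)"
    and gd: "\<forall>x. (g has_derivative blinfun_apply (Dg x)) (at x)"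
    and Dgc: "continuous_on UNIV Dg"
    and loc: "\<Omega> \<inter> ball p r = {x \<in> ball p r. x \<bullet> e > g x}"
  shows "\<exists>c r0. 0 < c \<and> c \<le> 1/4 \<and> 0 < r0 \<and> r0 \<le> 1/3 \<and>
            (\<forall>t. 0 < t \<and> t \<le> r0 \<longrightarrow> ball (p + t *\<^sub>R e) (c * t) \<subseteq> \<Omega>)"
proof -
  have gc: "continuous_on UNIV g"
    using gd by (intro continuous_at_imp_continuous_on ballI has_derivative_continuous) blast
  have pnot: "p \<notin> \<Omega>" using p op by (simp add: frontier_def interior_open)
  have pcl: "p \<in> closure \<Omega>" using p by (simp add: frontier_def)
  have gp1: "p \<bullet> e \<le> g p" using pnot loc r by auto
  have "p \<in> closure (ball p r \<inter> \<Omega>)"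
    using open_Int_closure_subset[of "ball p r" \<Omega>] pcl r by auto
  moreover have "ball p r \<inter> \<Omega> \<subseteq> {x. g x \<le> x \<bullet> e}"
  proof
    fix x assume "x \<in> ball p r \<inter> \<Omega>"
    then have "x \<in> \<Omega> \<inter> ball p r" by blast
    then have "g x < x \<bullet> e" unfolding loc by blast
    then show "x \<in> {x. g x \<le> x \<bullet> e}" by simp
  qed
  moreover have "closed {x. g x \<le> x \<bullet> e}"
    by (intro closed_Collect_le gc continuous_intros)
  ultimately have "p \<in> {x. g x \<le> x \<bullet> e}" by (meson closure_minimal subsetD)
  then have gp: "g p = p \<bullet> e" using gp1 by simp
  have "bounded (Dg ` cball p 1)"
    by (intro compact_imp_bounded compact_continuous_image continuous_on_subset[OF Dgc]) auto
  then obtain L0 where L0: "\<forall>z\<in>cball p 1. norm (Dg z) \<le> L0" by (auto simp: bounded_iff)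
  define L where "L = max L0 0"
  have L: "L \<ge> 0" "\<And>z. z \<in> cball p 1 \<Longrightarrow> onorm (blinfun_apply (Dg z)) \<le> L"
    using L0 by (auto simp: L_def norm_blinfun.rep_eq[symmetric] intro: max.coboundedI1)
  have lip: "\<bar>g z - g p\<bar> \<le> L * norm (z - p)" if "z \<in> cball p 1" for z
    using differentiable_bound[OF convex_cball has_derivative_at_withinI[OF gd[rule_format]] L(2) that, of p]
    by simp
  define c where "c = 1 / (4 * (L + 1))"
  define r0 where "r0 = min (1/3) (r/2)"
  have c: "0 < c" "c \<le> 1/4" using L by (auto simp: c_def field_simps)
  have r0: "0 < r0" "r0 \<le> 1/3" "r0 \<le> r/2" using r by (auto simp: r0_def)
  have "ball (p + t *\<^sub>R e) (c * t) \<subseteq> \<Omega>" if t: "0 < t" "t \<le> r0" for t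
  proof
    fix y assume y: "y \<in> ball (p + t *\<^sub>R e) (c * t)"
    define z where "z = y - (p + t *\<^sub>R e)"
    have z: "norm z < c * t" using y by (simp add: z_def dist_norm norm_minus_commute)
    have yz: "y = p + t *\<^sub>R e + z" by (simp add: z_def)
    have ze: "\<bar>z \<bullet> e\<bar> \<le> norm z" using Cauchy_Schwarz_ineq2[of z e] e by simp
    have ee: "e \<bullet> e = 1" using e by (simp add: norm_eq_sqrt_inner)
    have ct: "c * t \<le> t / 4" using c t by (simp add: mult_right_mono)
    have "norm (y - p) \<le> t + norm z" using e t by (simp add: yz norm_triangle_le)
    also have "\<dots> < r" using z ct t r0 by linarith
    finally have yb: "y \<in> ball p r" by (simp add: dist_norm norm_minus_commute)
    define q where "q = y - ((y - p) \<bullet> e) *\<^sub>R e"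
    have qe: "q \<bullet> e = p \<bullet> e" by (simp add: q_def inner_diff_left ee)
    have "q - (q \<bullet> e) *\<^sub>R e = y - (y \<bullet> e) *\<^sub>R e"
      unfolding qe by (simp add: q_def inner_diff_left algebra_simps)
    then have gq: "g q = g y" using gproj by metis
    have qp: "q - p = z - (z \<bullet> e) *\<^sub>R e"
      by (simp add: q_def yz inner_add_left ee algebra_simps)
    have nqp: "norm (q - p) \<le> 2 * norm z"
    proof -
      have "norm (q - p) \<le> norm z + norm ((z \<bullet> e) *\<^sub>R e)" unfolding qp by (rule norm_triangle_ineq4)
      also have "\<dots> \<le> 2 * norm z" using ze e by simp
      finally show ?thesis .
    qed
    have "norm (q - p) \<le> 1" using nqp z ct t r0 by linarith
    then have "q \<in> cball p 1" by (simp add: dist_norm norm_minus_commute)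
    then have l1: "\<bar>g q - g p\<bar> \<le> L * norm (q - p)" by (rule lip)
    have l2: "L * norm (q - p) \<le> L * (2 * norm z)" using nqp L(1) by (rule mult_left_mono)
    have "g y \<le> p \<bullet> e + L * (2 * norm z)"
      using l1 l2 gp gq by linarith
    also have "\<dots> < p \<bullet> e + t - c * t"
    proof -
      have "L * (2 * norm z) \<le> L * (2 * (c * t))" using z L(1) by (intro mult_left_mono) auto
      also have "\<dots> < t - c * t"
      proof -
        have "c * (2 * L + 1) < 1" using L by (simp add: c_def field_simps)
        then have "c * (2 * L + 1) * t < t" using t by simp
        then show ?thesis by (simp add: algebra_simps)
      qed
      finally show ?thesis by simp
    qed
    also have "\<dots> \<le> y \<bullet> e"
    proof -
      have "y \<bullet> e = p \<bullet> e + t + z \<bullet> e" by (simp add: yz inner_add_left ee)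
      then show ?thesis using ze z by linarith
    qed
    finally have "g y < y \<bullet> e" .
    then show "y \<in> \<Omega>" using yb loc by blast
  qed
  then show ?thesis using c r0 by blast
qed

locale ctx =
  fixes \<Omega> :: "'n::euclidean_space set" and \<mu> :: "real measure" and v0 :: "'n \<Rightarrow> real"
  assumes sets_mu: "sets \<mu> = sets borel" and fin_mu: "finite_measure \<mu>"
    and pos_mu: "emeasure \<mu> {0<..<1} > 0"
    and op: "open \<Omega>" and bd: "bounded \<Omega>" and ne: "\<Omega> \<noteq> {}"
    and v0c: "continuous_on (closure \<Omega>) v0"
begin


lemma DIM_ge1: "DIM('n) \<ge> 1"
  using DIM_positive[where 'a='n] by linarith

lemma Omega_sets: "\<Omega> \<in> sets lborel" using op by simp

lemma Omega_fin: "emeasure lborel \<Omega> < \<infinity>" using bd by (rule emeasure_bounded_finite)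

lemma mu_sets: "{0<..<1::real} \<in> sets \<mu>" using sets_mu by simp

lemma mu_fin: "emeasure \<mu> {0<..<1::real} < \<infinity>"
  using finite_measure.emeasure_finite[OF fin_mu] by (simp add: top.not_eq_extremum)

lemma v0_bdd: obtains M where "M \<ge> 0" "\<And>y. y \<in> closure \<Omega> \<Longrightarrow> \<bar>v0 y\<bar> \<le> M"
proof -
  have "compact (closure \<Omega>)" using bd by (simp add: compact_closure)
  then have "bounded (v0 ` closure \<Omega>)"
    by (intro compact_imp_bounded compact_continuous_image v0c)
  then obtain M where "\<forall>y\<in>v0 ` closure \<Omega>. norm y \<le> M" by (auto simp: bounded_iff)
  then show ?thesis using that[of "max M 0"] by force
qed

lemma w_bdd: obtains W where "W \<ge> 0" "\<And>s. s \<in> {0..1} \<Longrightarrow> \<bar>cNs DIM('n) s\<bar> \<le> W"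
proof -
  obtain W where "\<forall>s\<in>{0..1}. \<bar>cNs DIM('n) s\<bar> \<le> W" using cNs_bdd DIM_ge1 by blast
  then show ?thesis using that[of "max W 0"] by force
qed

lemma KI_int:
  assumes x: "x \<notin> closure \<Omega>" and fc: "continuous_on \<Omega> f" and fb: "\<And>y. y\<in>\<Omega> \<Longrightarrow> \<bar>f y\<bar> \<le> Mf"
    and d: "0 < d" "\<And>y. y\<in>\<Omega> \<Longrightarrow> d \<le> norm (x - y)" and s: "0 \<le> s" "s \<le> 1"
  shows "set_integrable lborel \<Omega> (\<lambda>y. f y / norm (x - y) powr (real DIM('n) + 2 * s))"
    and "\<bar>KI \<Omega> f x s\<bar> \<le> Mf * max 1 ((1/d) powr (real DIM('n) + 2)) * measure lborel \<Omega>"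
proof -
  have Mf: "Mf \<ge> 0" using ne fb by force
  have b: "\<bar>f y / norm (x - y) powr (real DIM('n) + 2 * s)\<bar> \<le> Mf * max 1 ((1/d) powr (real DIM('n) + 2))" if y: "y \<in> \<Omega>" for y
  proof -
    have "\<bar>f y / norm (x - y) powr (real DIM('n) + 2 * s)\<bar> = \<bar>f y\<bar> * (1 / norm (x - y) powr (real DIM('n) + 2 * s))"
      by (simp add: abs_mult)
    also have "\<dots> \<le> Mf * max 1 ((1/d) powr (real DIM('n) + 2))"
      using y fb[OF y] d s Mf
      by (intro mult_mono kernel_bound) auto
    finally show ?thesis .
  qed
  show i: "set_integrable lborel \<Omega> (\<lambda>y. f y / norm (x - y) powr (real DIM('n) + 2 * s))"
    by (rule set_integrable_bdd[OF Omega_sets Omega_fin meas_kernel_y[OF op x fc] b])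
  show "\<bar>KI \<Omega> f x s\<bar> \<le> Mf * max 1 ((1/d) powr (real DIM('n) + 2)) * measure lborel \<Omega>"
    unfolding KI_def by (rule set_integral_abs_bound[OF i Omega_sets Omega_fin b])
qed

lemma w_meas: "(\<lambda>s. indicator {0<..<1} s * cNs DIM('n) s) \<in> borel_measurable borel"
proof -
  have "continuous_on {0<..<1} (cNs DIM('n))"
    by (rule continuous_on_subset[OF cNs_cont[OF DIM_ge1]]) auto
  then have "(\<lambda>s. indicator {0<..<1} s *\<^sub>R cNs DIM('n) s) \<in> borel_measurable borel"
    by (intro borel_measurable_continuous_on_indicator) auto
  then show ?thesis by simp
qed

lemma KJ_int:
  assumes x: "x \<notin> closure \<Omega>" and fc: "continuous_on \<Omega> f" and fb: "\<And>y. y\<in>\<Omega> \<Longrightarrow> \<bar>f y\<bar> \<le> Mf"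
  shows "set_integrable \<mu> {0<..<1} (\<lambda>s. cNs DIM('n) s * KI \<Omega> f x s)"
proof -
  obtain d where d: "d > 0" "\<forall>x'\<in>ball x d. \<forall>y\<in>\<Omega>. d \<le> norm (x' - y)" using dist_away[OF x] by blast
  obtain W where W: "W \<ge> 0" "\<And>s. s \<in> {0..1} \<Longrightarrow> \<bar>cNs DIM('n) s\<bar> \<le> W" using w_bdd by blast
  have m: "(\<lambda>s. indicator {0<..<1} s * (cNs DIM('n) s * KI \<Omega> f x s)) \<in> borel_measurable \<mu>"
  proof -
    have "(\<lambda>s. (indicator {0<..<1} s * cNs DIM('n) s) * KI \<Omega> f x s) \<in> borel_measurable borel"
      using w_meas meas_kernel_s[OF op x fc] by (rule borel_measurable_times)
    then show ?thesis by (simp add: measurable_cong_sets[OF sets_mu refl] mult.assoc)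
  qed
  have b: "\<bar>cNs DIM('n) s * KI \<Omega> f x s\<bar> \<le> W * (Mf * max 1 ((1/d) powr (real DIM('n) + 2)) * measure lborel \<Omega>)"
    if s: "s \<in> {0<..<1}" for s
    unfolding abs_mult
    using d s W by (intro mult_mono KI_int(2)[OF x fc fb, of d]) auto
  show ?thesis by (rule set_integrable_bdd[OF mu_sets mu_fin m b])
qed


lemma W0_int: "set_integrable \<mu> {0<..<1} (cNs DIM('n))"
proof -
  obtain W where W: "W \<ge> 0" "\<And>s. s \<in> {0..1} \<Longrightarrow> \<bar>cNs DIM('n) s\<bar> \<le> W" using w_bdd by blast
  show ?thesis
    by (rule set_integrable_bdd[OF mu_sets mu_fin, of _ W])
       (use W w_meas in \<open>auto simp: measurable_cong_sets[OF sets_mu refl]\<close>)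
qed

lemma W0_pos: "0 < (LINT s:{0<..<1}|\<mu>. cNs DIM('n) s)"
proof -
  let ?f = "\<lambda>s. indicator {0<..<1::real} s *\<^sub>R cNs DIM('n) s"
  have i: "integrable \<mu> ?f" using W0_int by (simp add: set_integrable_def)
  have nn: "\<And>s. ?f s \<ge> 0" using cNs_pos[OF DIM_ge1] by (auto simp: indicator_def less_imp_le)
  have "{x \<in> space \<mu>. ?f x \<noteq> 0} = {0<..<1}"
    using sets_eq_imp_space_eq[OF sets_mu] apply (auto simp: indicator_def)
    using cNs_pos[OF DIM_ge1] by fastforce
  then have "(LINT x|\<mu>. \<bar>?f x\<bar>) \<noteq> 0" using integral_0_iff[OF i] pos_mu by auto
  moreover have "(LINT x|\<mu>. \<bar>?f x\<bar>) = (LINT x|\<mu>. ?f x)" using nn by simp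
  moreover have "(LINT x|\<mu>. ?f x) \<ge> 0" using nn by (intro integral_nonneg_AE) auto
  ultimately show ?thesis unfolding set_lebesgue_integral_def by linarith
qed

lemma measOmega_pos: "0 < measure lborel \<Omega>"
proof -
  obtain y where y: "y \<in> \<Omega>" using ne by blast
  obtain r where r: "r > 0" "ball y r \<subseteq> \<Omega>" using op y open_contains_ball by blast
  have "measure lborel (ball y r) \<le> measure lborel \<Omega>"
    using r Omega_sets Omega_fin by (intro measure_mono_fmeasurable) (auto simp: fmeasurable_def)
  moreover have "measure lborel (ball y r) > 0" by (rule content_ball_pos[OF r(1)])
  ultimately show ?thesis by linarith
qed

lemma KJ_lower:
  assumes x: "x \<notin> closure \<Omega>" and L: "\<And>s. s \<in> {0<..<1} \<Longrightarrow> L \<le> KI \<Omega> (\<lambda>_. 1) x s"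
  shows "L * (LINT s:{0<..<1}|\<mu>. cNs DIM('n) s) \<le> KJ \<Omega> \<mu> (\<lambda>_. 1) x"
proof -
  have "(LINT s:{0<..<1}|\<mu>. cNs DIM('n) s * L) \<le> KJ \<Omega> \<mu> (\<lambda>_. 1) x"
    unfolding KJ_def
  proof (rule set_integral_mono)
    show "set_integrable \<mu> {0<..<1} (\<lambda>s. cNs DIM('n) s * L)"
      using W0_int by (rule set_integrable_mult_left)
    show "set_integrable \<mu> {0<..<1} (\<lambda>s. cNs DIM('n) s * KI \<Omega> (\<lambda>_. 1) x s)"
      by (rule KJ_int[OF x, of _ 1]) auto
    show "cNs DIM('n) s * L \<le> cNs DIM('n) s * KI \<Omega> (\<lambda>_. 1) x s" if "s \<in> {0<..<1}" for s
      using that L[OF that] cNs_pos[OF DIM_ge1, of s] by (intro mult_left_mono) auto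
  qed
  then show ?thesis by (simp add: mult.commute)
qed

lemma KI_lower_const:
  assumes x: "x \<notin> closure \<Omega>"
  obtains c where "c > 0" "\<And>s. s \<in> {0<..<1} \<Longrightarrow> c \<le> KI \<Omega> (\<lambda>_. 1) x s"
proof -
  obtain B where B: "\<forall>y\<in>\<Omega>. norm y \<le> B" using bd by (auto simp: bounded_iff)
  define D where "D = max 1 (norm x + B)"
  have D1: "D \<ge> 1" by (simp add: D_def)
  obtain d where d: "d > 0" "\<forall>x'\<in>ball x d. \<forall>y\<in>\<Omega>. d \<le> norm (x' - y)" using dist_away[OF x] by blast
  have dx: "\<And>y. y \<in> \<Omega> \<Longrightarrow> d \<le> norm (x - y)" using d by auto
  have nD: "norm (x - y) \<le> D" if "y \<in> \<Omega>" for y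
  proof -
    have "norm (x - y) \<le> norm x + norm y" by (rule norm_triangle_ineq4)
    then show ?thesis using B that by (auto simp: D_def)
  qed
  define c where "c = 1 / D powr (real DIM('n) + 2) * measure lborel \<Omega>"
  have "c > 0" using D1 measOmega_pos by (simp add: c_def)
  moreover have "c \<le> KI \<Omega> (\<lambda>_. 1) x s" if s: "s \<in> {0<..<1}" for s
  proof -
    have "(LINT y:\<Omega>|lborel. 1 / D powr (real DIM('n) + 2)) \<le> KI \<Omega> (\<lambda>_. 1) x s"
      unfolding KI_def
    proof (rule set_integral_mono)
      show "set_integrable lborel \<Omega> (\<lambda>y. 1 / D powr (real DIM('n) + 2))"
        by (rule set_integrable_bdd[OF Omega_sets Omega_fin, of _ "1 / D powr (real DIM('n) + 2)"])
           (use op in \<open>auto intro!: borel_measurable_divide borel_measurable_indicator\<close>)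
      show "set_integrable lborel \<Omega> (\<lambda>y. 1 / norm (x - y) powr (real DIM('n) + 2 * s))"
        using KI_int(1)[OF x, of "\<lambda>_. 1" 1 d s] d s dx by auto
      show "1 / D powr (real DIM('n) + 2) \<le> 1 / norm (x - y) powr (real DIM('n) + 2 * s)"
        if y: "y \<in> \<Omega>" for y
      proof -
        have "norm (x - y) powr (real DIM('n) + 2 * s) \<le> D powr (real DIM('n) + 2 * s)"
          using nD[OF y] by (intro powr_mono2) (use s in auto)
        also have "\<dots> \<le> D powr (real DIM('n) + 2)" using D1 s by (intro powr_mono) auto
        finally have le: "norm (x - y) powr (real DIM('n) + 2 * s) \<le> D powr (real DIM('n) + 2)" .
        have "norm (x - y) > 0" using dx[OF y] d by linarith
        then have "norm (x - y) powr (real DIM('n) + 2 * s) > 0" by simp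
        then show ?thesis using le D1 by (intro divide_left_mono mult_pos_pos) auto
      qed
    qed
    then show ?thesis using Omega_sets Omega_fin by (simp add: set_integral_const c_def mult.commute)
  qed
  ultimately show ?thesis using that by blast
qed

lemma Den_pos: assumes x: "x \<notin> closure \<Omega>" shows "KJ \<Omega> \<mu> (\<lambda>_. 1) x > 0"
proof -
  obtain c where c: "c > 0" "\<And>s. s \<in> {0<..<1} \<Longrightarrow> c \<le> KI \<Omega> (\<lambda>_. 1) x s"
    using KI_lower_const[OF x] by blast
  have "c * (LINT s:{0<..<1}|\<mu>. cNs DIM('n) s) \<le> KJ \<Omega> \<mu> (\<lambda>_. 1) x" by (rule KJ_lower[OF x c(2)])
  moreover have "c * (LINT s:{0<..<1}|\<mu>. cNs DIM('n) s) > 0" using c W0_pos by simp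
  ultimately show ?thesis by linarith
qed


lemma v0_Omega: "continuous_on \<Omega> v0"
  using v0c closure_subset by (rule continuous_on_subset)

lemma neumann_part:
  assumes x: "x \<notin> closure \<Omega>"
  shows "set_integrable \<mu> {0<..<1} (\<lambda>s. nonlocal_neumann \<Omega> s (ext_v \<Omega> \<mu> v0) x)
     \<and> (LINT s:{0<..<1}|\<mu>. nonlocal_neumann \<Omega> s (ext_v \<Omega> \<mu> v0) x) = 0"
proof -
  obtain M where M: "M \<ge> 0" "\<And>y. y \<in> closure \<Omega> \<Longrightarrow> \<bar>v0 y\<bar> \<le> M" using v0_bdd by blast
  have Mb: "\<And>y. y \<in> \<Omega> \<Longrightarrow> \<bar>v0 y\<bar> \<le> M" using M closure_subset by blast
  obtain d where d: "d > 0" "\<forall>x'\<in>ball x d. \<forall>y\<in>\<Omega>. d \<le> norm (x' - y)" using dist_away[OF x] by blast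
  have dx: "\<And>y. y \<in> \<Omega> \<Longrightarrow> d \<le> norm (x - y)" using d by auto
  define c where "c = ext_v \<Omega> \<mu> v0 x"
  have eq: "nonlocal_neumann \<Omega> s (ext_v \<Omega> \<mu> v0) x
      = c * (cNs DIM('n) s * KI \<Omega> (\<lambda>_. 1) x s) - cNs DIM('n) s * KI \<Omega> v0 x s"
    if s: "s \<in> {0<..<1}" for s
  proof -
    have i1: "set_integrable lborel \<Omega> (\<lambda>y. 1 / norm (x - y) powr (real DIM('n) + 2 * s))"
      using KI_int(1)[OF x, of "\<lambda>_. 1" 1 d s] d dx s by auto
    have i2: "set_integrable lborel \<Omega> (\<lambda>y. v0 y / norm (x - y) powr (real DIM('n) + 2 * s))"
      using KI_int(1)[OF x v0_Omega Mb d(1) dx] s by auto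
    have "(LINT y:\<Omega>|lborel. (ext_v \<Omega> \<mu> v0 x - ext_v \<Omega> \<mu> v0 y) / norm (x - y) powr (real DIM('n) + 2 * s))
        = (LINT y:\<Omega>|lborel. c * (1 / norm (x - y) powr (real DIM('n) + 2 * s)) - v0 y / norm (x - y) powr (real DIM('n) + 2 * s))"
      using closure_subset[of \<Omega>]
      by (intro set_lebesgue_integral_cong Omega_sets) (auto simp: c_def ext_v_def diff_divide_distrib)
    also have "\<dots> = c * KI \<Omega> (\<lambda>_. 1) x s - KI \<Omega> v0 x s"
      unfolding KI_def
      by (subst set_integral_diff(2)[OF set_integrable_mult_right[OF i1] i2])
         (simp only: set_integral_mult_right)
    finally have "(LINT y:\<Omega>|lborel. (ext_v \<Omega> \<mu> v0 x - ext_v \<Omega> \<mu> v0 y) / norm (x - y) powr (real DIM('n) + 2 * s)) = c * KI \<Omega> (\<lambda>_. 1) x s - KI \<Omega> v0 x s" .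
    then show ?thesis unfolding nonlocal_neumann_def by (simp only: right_diff_distrib mult.left_commute)
  qed
  have j1: "set_integrable \<mu> {0<..<1} (\<lambda>s. cNs DIM('n) s * KI \<Omega> (\<lambda>_. 1) x s)"
    by (rule KJ_int[OF x, of _ 1]) auto
  have j2: "set_integrable \<mu> {0<..<1} (\<lambda>s. cNs DIM('n) s * KI \<Omega> v0 x s)"
    by (rule KJ_int[OF x v0_Omega Mb])
  have j: "set_integrable \<mu> {0<..<1} (\<lambda>s. c * (cNs DIM('n) s * KI \<Omega> (\<lambda>_. 1) x s) - cNs DIM('n) s * KI \<Omega> v0 x s)"
    using j1 j2 by (intro set_integral_diff(1) set_integrable_mult_right) auto
  have "(LINT s:{0<..<1}|\<mu>. nonlocal_neumann \<Omega> s (ext_v \<Omega> \<mu> v0) x)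
      = (LINT s:{0<..<1}|\<mu>. c * (cNs DIM('n) s * KI \<Omega> (\<lambda>_. 1) x s) - cNs DIM('n) s * KI \<Omega> v0 x s)"
    using eq by (intro set_lebesgue_integral_cong mu_sets) auto
  also have "\<dots> = c * KJ \<Omega> \<mu> (\<lambda>_. 1) x - KJ \<Omega> \<mu> v0 x"
    using j1 j2 by (simp add: set_integral_diff KJ_def)
  also have "\<dots> = 0" using Den_pos[OF x] x by (simp add: c_def ext_v_eq)
  finally have "(LINT s:{0<..<1}|\<mu>. nonlocal_neumann \<Omega> s (ext_v \<Omega> \<mu> v0) x) = 0" .
  moreover have "set_integrable \<mu> {0<..<1} (\<lambda>s. nonlocal_neumann \<Omega> s (ext_v \<Omega> \<mu> v0) x)"
    using j eq by (subst set_integrable_cong[OF refl refl]) auto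
  ultimately show ?thesis by blast
qed


lemma KJ_cont:
  assumes x0: "x0 \<notin> closure \<Omega>" and fc: "continuous_on \<Omega> f" and fb: "\<And>y. y\<in>\<Omega> \<Longrightarrow> \<bar>f y\<bar> \<le> Mf"
  shows "isCont (KJ \<Omega> \<mu> f) x0"
proof -
  have Mf: "Mf \<ge> 0" using ne fb by force
  obtain d where d: "d > 0" "\<forall>x'\<in>ball x0 d. \<forall>y\<in>\<Omega>. d \<le> norm (x' - y)" using dist_away[OF x0] by blast
  obtain B where B: "\<forall>y\<in>\<Omega>. norm y \<le> B" using bd by (auto simp: bounded_iff)
  define D where "D = norm x0 + d + B"
  have nD: "norm (x - y) \<le> D" if "x \<in> ball x0 d" "y \<in> \<Omega>" for x y
  proof -
    have "norm (x - y) \<le> norm x + norm y" by (rule norm_triangle_ineq4)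
    moreover have "norm x \<le> norm x0 + d" using that norm_triangle_ineq2[of x x0]
      by (auto simp: dist_norm norm_minus_commute)
    ultimately show ?thesis using B that by (auto simp: D_def)
  qed
  obtain W where W: "W \<ge> 0" "\<And>s. s \<in> {0..1} \<Longrightarrow> \<bar>cNs DIM('n) s\<bar> \<le> W" using w_bdd by blast
  define S where "S = {d..D} \<times> {0..1::real}"
  define \<phi> where "\<phi> = (\<lambda>p::real\<times>real. 1 / fst p powr (real DIM('n) + 2 * snd p))"
  have "continuous_on S \<phi>" unfolding \<phi>_def S_def using d by (intro continuous_intros) auto
  then have uc: "uniformly_continuous_on S \<phi>"
    by (rule compact_uniformly_continuous) (simp add: S_def compact_Times)
  show ?thesis unfolding continuous_at_eps_delta
  proof (intro allI impI)
    fix \<epsilon> :: real assume e: "\<epsilon> > 0"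
    define m\<Omega> where "m\<Omega> = measure lborel \<Omega>"
    define m\<mu> where "m\<mu> = measure \<mu> {0<..<1}"
    have m\<Omega>: "m\<Omega> \<ge> 0" and m\<mu>: "m\<mu> \<ge> 0" by (auto simp: m\<Omega>_def m\<mu>_def)
    define E where "E = \<epsilon> / (2 * ((W+1) * (Mf+1) * (m\<Omega>+1) * (m\<mu>+1)))"
    have Epos: "E > 0" using e W Mf m\<Omega> m\<mu> by (simp add: E_def)
    obtain \<delta>0 where \<delta>0: "\<delta>0 > 0" "\<forall>p\<in>S. \<forall>p'\<in>S. dist p' p < \<delta>0 \<longrightarrow> dist (\<phi> p') (\<phi> p) < E"
      using uc Epos unfolding uniformly_continuous_on_def by blast
    show "\<exists>\<delta>>0. \<forall>x'. dist x' x0 < \<delta> \<longrightarrow> dist (KJ \<Omega> \<mu> f x') (KJ \<Omega> \<mu> f x0) < \<epsilon>"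
    proof (intro exI[of _ "min d \<delta>0"] conjI allI impI)
      show "min d \<delta>0 > 0" using d \<delta>0 by simp
      fix x assume xd: "dist x x0 < min d \<delta>0"
      have xb: "x \<in> ball x0 d" using xd by (simp add: dist_commute)
      have x0b: "x0 \<in> ball x0 d" using d by simp
      have xc: "x \<notin> closure \<Omega>"
      proof
        assume "x \<in> closure \<Omega>"
        moreover have "\<forall>y\<in>\<Omega>. d \<le> dist x y" using d xb by (simp add: dist_norm)
        ultimately show False using d(1)
          by (metis closure_approachable dist_commute not_less)
      qed
      have dx: "\<And>y. y \<in> \<Omega> \<Longrightarrow> d \<le> norm (x - y)" using d xb by auto
      have dx0: "\<And>y. y \<in> \<Omega> \<Longrightarrow> d \<le> norm (x0 - y)" using d x0b by auto
      have inner: "\<bar>KI \<Omega> f x s - KI \<Omega> f x0 s\<bar> \<le> Mf * E * m\<Omega>" if s: "s \<in> {0<..<1}" for s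
      proof -
        have i1: "set_integrable lborel \<Omega> (\<lambda>y. f y / norm (x - y) powr (real DIM('n) + 2 * s))"
          using KI_int(1)[OF xc fc fb d(1) dx] s by auto
        have i2: "set_integrable lborel \<Omega> (\<lambda>y. f y / norm (x0 - y) powr (real DIM('n) + 2 * s))"
          using KI_int(1)[OF x0 fc fb d(1) dx0] s by auto
        have pb: "\<bar>f y / norm (x - y) powr (real DIM('n) + 2 * s) - f y / norm (x0 - y) powr (real DIM('n) + 2 * s)\<bar>
            \<le> Mf * E" if y: "y \<in> \<Omega>" for y
        proof -
          have p1: "(norm (x - y), s) \<in> S" using dx[OF y] nD[OF xb y] s by (auto simp: S_def)
          have p2: "(norm (x0 - y), s) \<in> S" using dx0[OF y] nD[OF x0b y] s by (auto simp: S_def)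
          have "\<bar>norm (x - y) - norm (x0 - y)\<bar> \<le> norm ((x - y) - (x0 - y))" by (rule norm_triangle_ineq3)
          also have "\<dots> = dist x x0" by (simp add: dist_norm)
          finally have "dist (norm (x - y), s) (norm (x0 - y), s) < \<delta>0" using xd
            by (simp add: dist_Pair_Pair dist_real_def)
          then have "\<bar>\<phi> (norm (x - y), s) - \<phi> (norm (x0 - y), s)\<bar> < E"
            using \<delta>0(2) p1 p2 by (auto simp: dist_real_def)
          then have "\<bar>1 / norm (x - y) powr (real DIM('n) + 2 * s) - 1 / norm (x0 - y) powr (real DIM('n) + 2 * s)\<bar> \<le> E"
            by (simp add: \<phi>_def)
          then have "\<bar>f y\<bar> * \<bar>1 / norm (x - y) powr (real DIM('n) + 2 * s) - 1 / norm (x0 - y) powr (real DIM('n) + 2 * s)\<bar> \<le> Mf * E"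
            using fb[OF y] Mf Epos by (intro mult_mono) auto
          then show ?thesis by (simp add: abs_mult[symmetric] right_diff_distrib)
        qed
        have "\<bar>KI \<Omega> f x s - KI \<Omega> f x0 s\<bar> = \<bar>LINT y:\<Omega>|lborel. f y / norm (x - y) powr (real DIM('n) + 2 * s) - f y / norm (x0 - y) powr (real DIM('n) + 2 * s)\<bar>"
          unfolding KI_def by (simp add: set_integral_diff(2)[OF i1 i2])
        also have "\<dots> \<le> Mf * E * m\<Omega>" unfolding m\<Omega>_def
          by (rule set_integral_abs_bound[OF set_integral_diff(1)[OF i1 i2] Omega_sets Omega_fin pb])
        finally show ?thesis .
      qed
      have j1: "set_integrable \<mu> {0<..<1} (\<lambda>s. cNs DIM('n) s * KI \<Omega> f x s)" by (rule KJ_int[OF xc fc fb])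
      have j2: "set_integrable \<mu> {0<..<1} (\<lambda>s. cNs DIM('n) s * KI \<Omega> f x0 s)" by (rule KJ_int[OF x0 fc fb])
      have ob: "\<bar>cNs DIM('n) s * KI \<Omega> f x s - cNs DIM('n) s * KI \<Omega> f x0 s\<bar> \<le> W * (Mf * E * m\<Omega>)"
        if s: "s \<in> {0<..<1}" for s
        unfolding right_diff_distrib[symmetric] abs_mult
        using W(2)[of s] s inner[OF s] W by (intro mult_mono) auto
      have "\<bar>KJ \<Omega> \<mu> f x - KJ \<Omega> \<mu> f x0\<bar> = \<bar>LINT s:{0<..<1}|\<mu>. cNs DIM('n) s * KI \<Omega> f x s - cNs DIM('n) s * KI \<Omega> f x0 s\<bar>"
        unfolding KJ_def by (simp add: set_integral_diff(2)[OF j1 j2])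
      also have "\<dots> \<le> W * (Mf * E * m\<Omega>) * m\<mu>" unfolding m\<mu>_def
        by (rule set_integral_abs_bound[OF set_integral_diff(1)[OF j1 j2] mu_sets mu_fin ob])
      also have "\<dots> \<le> (W+1) * (Mf+1) * (m\<Omega>+1) * (m\<mu>+1) * E"
      proof -
        have "W * (Mf * E * m\<Omega>) * m\<mu> = (W * Mf * m\<Omega> * m\<mu>) * E" by (simp add: algebra_simps)
        also have "\<dots> \<le> ((W+1) * (Mf+1) * (m\<Omega>+1) * (m\<mu>+1)) * E"
          using W Mf m\<Omega> m\<mu> Epos by (intro mult_right_mono mult_mono) auto
        finally show ?thesis by simp
      qed
      also have "\<dots> = \<epsilon> / 2"
      proof -
        define P where "P = (W+1) * (Mf+1) * (m\<Omega>+1) * (m\<mu>+1)"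
        have "P > 0" using W Mf m\<Omega> m\<mu> by (simp add: P_def)
        then have "P * (\<epsilon> / (2 * P)) = \<epsilon> / 2" by simp
        then show ?thesis unfolding E_def P_def[symmetric] .
      qed
      also have "\<dots> < \<epsilon>" using e by simp
      finally show "dist (KJ \<Omega> \<mu> f x) (KJ \<Omega> \<mu> f x0) < \<epsilon>" by (simp add: dist_real_def)
    qed
  qed
qed


lemma KI_lower_boundary:
  assumes x: "x \<notin> closure \<Omega>" and e: "norm e = 1" and c: "0 < c" "c \<le> 1/4" and r0: "0 < r0" "r0 \<le> 1/3"
    and balls: "\<And>t. 0 < t \<Longrightarrow> t \<le> r0 \<Longrightarrow> ball (p + t *\<^sub>R e) (c * t) \<subseteq> \<Omega>"
    and xp: "norm (x - p) < r0 / 2^n" and s: "0 \<le> s" "s \<le> 1"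
  shows "real (Suc n) * ((c/3)^DIM('n) * measure lborel (ball (0::'n) 1)) \<le> KI \<Omega> (\<lambda>_. 1) x s"
proof -
  define t where "t k = r0 / 2^k" for k :: nat
  define B where "B k = ball (p + t k *\<^sub>R e) (c * t k)" for k
  define a where "a k = 1 / (3 * t k)^DIM('n)" for k
  have tpos: "t k > 0" for k using r0 by (simp add: t_def)
  have tle: "t k \<le> r0" for k using r0 by (simp add: t_def field_simps)
  have tmono: "t k \<le> t j" if "j \<le> k" for j k
    unfolding t_def using r0 that by (intro divide_left_mono power_increasing) auto
  have thalf: "t k \<le> t j / 2" if "j < k" for j k
  proof -
    have "t k \<le> t (Suc j)" using that by (intro tmono) auto
    then show ?thesis by (simp add: t_def)
  qed
  have BO: "B k \<subseteq> \<Omega>" for k unfolding B_def using balls tpos tle by blast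
  have Bs: "B k \<in> sets lborel" for k by (simp add: B_def)
  have Bf: "emeasure lborel (B k) < \<infinity>" for k unfolding B_def by (rule emeasure_lborel_ball_finite)
  have disj0: "B j \<inter> B k = {}" if "j < k" for j k
  proof (rule ccontr)
    assume "B j \<inter> B k \<noteq> {}"
    then obtain y where y1: "norm (y - (p + t j *\<^sub>R e)) < c * t j" and y2: "norm (y - (p + t k *\<^sub>R e)) < c * t k"
      by (auto simp: B_def dist_norm norm_minus_commute)
    have "\<bar>t j - t k\<bar> = norm ((p + t j *\<^sub>R e) - (p + t k *\<^sub>R e))" using e
      by (simp add: scaleR_diff_left[symmetric])
    also have "\<dots> = norm ((y - (p + t k *\<^sub>R e)) - (y - (p + t j *\<^sub>R e)))" by simp
    also have "\<dots> \<le> norm (y - (p + t k *\<^sub>R e)) + norm (y - (p + t j *\<^sub>R e))"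
      by (rule norm_triangle_ineq4)
    also have "\<dots> < c * t j + c * t k" using y1 y2 by linarith
    finally have lt: "\<bar>t j - t k\<bar> < c * t j + c * t k" .
    have h: "t k \<le> t j / 2" using thalf[OF that] .
    have "c * t j \<le> t j / 4" "c * t k \<le> t k / 4" using c tpos[of j] tpos[of k] by (simp_all add: mult_right_mono)
    then show False using lt h tpos[of k] by linarith
  qed
  have disj: "j \<noteq> k \<Longrightarrow> y \<in> B j \<Longrightarrow> y \<notin> B k" for j k y
    using disj0[of j k] disj0[of k j] by (cases "j < k") auto
  define G where "G y = (\<Sum>k\<le>n. indicator (B k) y * a k)" for y
  have apos: "a k > 0" for k using tpos[of k] by (simp add: a_def)
  have pw: "G y \<le> 1 / norm (x - y) powr (real DIM('n) + 2 * s)" if y: "y \<in> \<Omega>" for y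
  proof -
    have nxy: "norm (x - y) > 0" using x y closure_subset by force
    show ?thesis
    proof (cases "\<exists>j\<le>n. y \<in> B j")
      case True
      then obtain j where j: "j \<le> n" "y \<in> B j" by blast
      have "G y = indicator (B j) y * a j + (\<Sum>k\<in>{..n} - {j}. indicator (B k) y * a k)"
        unfolding G_def using j by (subst sum.remove[of _ j]) auto
      also have "(\<Sum>k\<in>{..n} - {j}. indicator (B k) y * a k) = 0"
        using disj[OF _ j(2)] by (intro sum.neutral) auto
      finally have Gy: "G y = a j" using j by simp
      have "norm (x - y) = norm ((x - p) - (y - p))" by simp
      also have "\<dots> \<le> norm (x - p) + norm (y - p)" by (rule norm_triangle_ineq4)
      also have "norm (y - p) \<le> norm (y - (p + t j *\<^sub>R e)) + t j"
      proof -
        have "norm (y - p) = norm ((y - (p + t j *\<^sub>R e)) + t j *\<^sub>R e)" by simp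
        also have "\<dots> \<le> norm (y - (p + t j *\<^sub>R e)) + norm (t j *\<^sub>R e)" by (rule norm_triangle_ineq)
        also have "norm (t j *\<^sub>R e) = t j" using e tpos[of j] by simp
        finally show ?thesis .
      qed
      also have "norm (y - (p + t j *\<^sub>R e)) < c * t j" using j(2) by (simp add: B_def dist_norm norm_minus_commute)
      finally have "norm (x - y) < norm (x - p) + c * t j + t j" by linarith
      moreover have "norm (x - p) < t j" using xp tmono[OF j(1)] by (simp add: t_def)
      moreover have "c * t j \<le> t j" using c tpos[of j] by (simp add: mult_right_mono)
      ultimately have n3: "norm (x - y) \<le> 3 * t j" by linarith
      have t3: "3 * t j \<le> 1" using tle[of j] r0 by linarith
      have "norm (x - y) powr (real DIM('n) + 2 * s) \<le> (3 * t j) powr (real DIM('n) + 2 * s)"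
        using n3 s by (intro powr_mono2) auto
      also have "\<dots> \<le> (3 * t j) powr (real DIM('n))"
        using t3 tpos[of j] s by (intro powr_mono') auto
      also have "\<dots> = (3 * t j) ^ DIM('n)" using tpos[of j] by (simp add: powr_realpow)
      finally have "norm (x - y) powr (real DIM('n) + 2 * s) \<le> (3 * t j) ^ DIM('n)" .
      then have "a j \<le> 1 / norm (x - y) powr (real DIM('n) + 2 * s)"
        unfolding a_def using nxy tpos[of j] by (intro divide_left_mono mult_pos_pos) auto
      then show ?thesis using Gy by simp
    next
      case False
      then have "G y = 0" unfolding G_def by (intro sum.neutral) auto
      then show ?thesis using nxy by simp
    qed
  qed
  have Gm: "(\<lambda>y. indicator \<Omega> y * G y) \<in> borel_measurable lborel"
    unfolding G_def using Bs op
    by (intro borel_measurable_times borel_measurable_sum borel_measurable_indicator borel_measurable_const) auto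
  have Gb: "\<bar>G y\<bar> \<le> (\<Sum>k\<le>n. a k)" for y
  proof -
    have "0 \<le> G y" unfolding G_def using apos by (intro sum_nonneg) (auto simp: less_imp_le)
    moreover have "G y \<le> (\<Sum>k\<le>n. a k)" unfolding G_def using apos
      by (intro sum_mono) (auto simp: indicator_def less_imp_le)
    ultimately show ?thesis by simp
  qed
  have Gi: "set_integrable lborel \<Omega> G"
    by (rule set_integrable_bdd[OF Omega_sets Omega_fin Gm Gb])
  have "(LINT y:\<Omega>|lborel. G y) = (LINT y|lborel. (\<Sum>k\<le>n. indicator (B k) y * a k))"
    unfolding set_lebesgue_integral_def G_def
  proof (rule arg_cong[where f="integral\<^sup>L lborel"], rule ext)
    fix y show "indicator \<Omega> y *\<^sub>R (\<Sum>k\<le>n. indicator (B k) y * a k) = (\<Sum>k\<le>n. indicator (B k) y * a k)"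
      using BO by (cases "y \<in> \<Omega>") (auto simp: indicator_def intro!: sum.neutral)
  qed
  also have "\<dots> = (\<Sum>k\<le>n. LINT y|lborel. indicator (B k) y * a k)"
    by (rule Bochner_Integration.integral_sum) (use Bs Bf in \<open>auto intro!: integrable_mult_left integrable_real_indicator\<close>)
  also have "\<dots> = (\<Sum>k\<le>n. measure lborel (B k) * a k)"
    by (simp add: integral_mult_left_zero)
  also have "\<dots> = (\<Sum>k\<le>n. (c/3)^DIM('n) * measure lborel (ball (0::'n) 1))"
  proof (rule sum.cong[OF refl])
    fix k
    have "measure lborel (B k) = (c * t k) ^ DIM('n) * measure lborel (ball (0::'n) 1)"
      unfolding B_def using c tpos[of k] by (intro content_ball_conv_unit_ball) auto
    then show "measure lborel (B k) * a k = (c/3)^DIM('n) * measure lborel (ball (0::'n) 1)"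
      using tpos[of k] by (simp add: a_def power_mult_distrib power_divide field_simps)
  qed
  also have "\<dots> = real (Suc n) * ((c/3)^DIM('n) * measure lborel (ball (0::'n) 1))" by simp
  finally have eqG: "(LINT y:\<Omega>|lborel. G y) = real (Suc n) * ((c/3)^DIM('n) * measure lborel (ball (0::'n) 1))" .
  have "(LINT y:\<Omega>|lborel. G y) \<le> KI \<Omega> (\<lambda>_. 1) x s"
    unfolding KI_def
  proof (rule set_integral_mono[OF Gi])
    obtain d where d: "d > 0" "\<forall>x'\<in>ball x d. \<forall>y\<in>\<Omega>. d \<le> norm (x' - y)" using dist_away[OF x] by blast
    show "set_integrable lborel \<Omega> (\<lambda>y. 1 / norm (x - y) powr (real DIM('n) + 2 * s))"
      using KI_int(1)[OF x, of "\<lambda>_. 1" 1 d s] d s by auto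
  qed (rule pw)
  then show ?thesis using eqG by simp
qed


lemma cont_boundary:
  assumes p: "p \<in> frontier \<Omega>" and e: "norm e = 1" and c: "0 < c" "c \<le> 1/4" and r0: "0 < r0" "r0 \<le> 1/3"
    and balls: "\<And>t. 0 < t \<Longrightarrow> t \<le> r0 \<Longrightarrow> ball (p + t *\<^sub>R e) (c * t) \<subseteq> \<Omega>"
  shows "isCont (ext_v \<Omega> \<mu> v0) p"
proof -
  have pcl: "p \<in> closure \<Omega>" using p by (simp add: frontier_def)
  obtain M where M: "M \<ge> 0" "\<And>y. y \<in> closure \<Omega> \<Longrightarrow> \<bar>v0 y\<bar> \<le> M" using v0_bdd by blast
  have Mb: "\<And>y. y \<in> \<Omega> \<Longrightarrow> \<bar>v0 y\<bar> \<le> M" using M closure_subset by blast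
  define W0 where "W0 = (LINT s:{0<..<1}|\<mu>. cNs DIM('n) s)"
  have W0: "W0 > 0" unfolding W0_def by (rule W0_pos)
  define c1 where "c1 = (c/3)^DIM('n) * measure lborel (ball (0::'n) 1)"
  have c1: "c1 > 0" unfolding c1_def using c by (simp add: content_ball_pos)
  have evp: "ext_v \<Omega> \<mu> v0 p = v0 p" using pcl by (simp add: ext_v_def)
  show ?thesis unfolding continuous_at_eps_delta
  proof (intro allI impI)
    fix \<epsilon> :: real assume \<epsilon>: "\<epsilon> > 0"
    obtain \<rho> where \<rho>: "\<rho> > 0" "\<forall>y\<in>closure \<Omega>. dist y p < \<rho> \<longrightarrow> dist (v0 y) (v0 p) < \<epsilon>/2"
      using v0c pcl \<epsilon> unfolding continuous_on_iff by (meson half_gt_zero)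
    define R where "R = max 1 ((1/(\<rho>/2)) powr (real DIM('n) + 2))"
    have R: "R \<ge> 0" by (simp add: R_def)
    define C where "C = 2 * M * R * measure lborel \<Omega>"
    have C: "C \<ge> 0" using M R by (simp add: C_def)
    obtain n :: nat where n: "C / (c1 * (\<epsilon>/2)) < real n" using reals_Archimedean2 by blast
    define \<delta> where "\<delta> = min (\<rho>/2) (r0 / 2^n)"
    show "\<exists>\<delta>>0. \<forall>x'. dist x' p < \<delta> \<longrightarrow> dist (ext_v \<Omega> \<mu> v0 x') (ext_v \<Omega> \<mu> v0 p) < \<epsilon>"
    proof (intro exI[of _ \<delta>] conjI allI impI)
      show "\<delta> > 0" using \<rho> r0 by (simp add: \<delta>_def)
      fix x assume xd: "dist x p < \<delta>"
      show "dist (ext_v \<Omega> \<mu> v0 x) (ext_v \<Omega> \<mu> v0 p) < \<epsilon>"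
      proof (cases "x \<in> closure \<Omega>")
        case True
        then have "dist (v0 x) (v0 p) < \<epsilon>/2" using \<rho> xd by (simp add: \<delta>_def)
        then show ?thesis using True evp \<epsilon> by (simp add: ext_v_def)
      next
        case False
        note x = False
        obtain d where d: "d > 0" "\<forall>x'\<in>ball x d. \<forall>y\<in>\<Omega>. d \<le> norm (x' - y)" using dist_away[OF x] by blast
        have dx: "\<And>y. y \<in> \<Omega> \<Longrightarrow> d \<le> norm (x - y)" using d by auto
        have xp: "norm (x - p) < \<rho>/2" "norm (x - p) < r0 / 2^n" using xd by (auto simp: \<delta>_def dist_norm)
        define Den where "Den = KJ \<Omega> \<mu> (\<lambda>_. 1) x"
        define Num where "Num = KJ \<Omega> \<mu> v0 x"
        have Den_ge: "real (Suc n) * c1 * W0 \<le> Den"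
          unfolding Den_def W0_def mult.assoc[symmetric]
          by (rule KJ_lower[OF x]) (use KI_lower_boundary[OF x e c r0 balls xp(2)] in \<open>auto simp: c1_def\<close>)
        have Dpos: "Den > 0" using Den_ge c1 W0 by (smt (verit) mult_pos_pos of_nat_0_less_iff zero_less_Suc)
        have inner: "\<bar>KI \<Omega> v0 x s - v0 p * KI \<Omega> (\<lambda>_. 1) x s\<bar> \<le> \<epsilon>/2 * KI \<Omega> (\<lambda>_. 1) x s + C"
          if s: "s \<in> {0<..<1}" for s
        proof -
          let ?K = "\<lambda>y. norm (x - y) powr (real DIM('n) + 2 * s)"
          have i1: "set_integrable lborel \<Omega> (\<lambda>y. 1 / ?K y)"
            using KI_int(1)[OF x, of "\<lambda>_. 1" 1 d s] d dx s by auto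
          have i2: "set_integrable lborel \<Omega> (\<lambda>y. v0 y / ?K y)"
            using KI_int(1)[OF x v0_Omega Mb d(1) dx] s by auto
          have i3: "set_integrable lborel \<Omega> (\<lambda>y. v0 y / ?K y - v0 p * (1 / ?K y))"
            using i1 i2 by (intro set_integral_diff(1) set_integrable_mult_right) auto
          have ic: "set_integrable lborel \<Omega> (\<lambda>y. 2 * M * R)"
            by (rule set_integrable_bdd[OF Omega_sets Omega_fin, of _ "\<bar>2 * M * R\<bar>"])
               (use op in \<open>auto intro!: borel_measurable_times borel_measurable_indicator\<close>)
          have i4: "set_integrable lborel \<Omega> (\<lambda>y. \<epsilon>/2 * (1 / ?K y) + 2 * M * R)"
            by (rule set_integral_add(1)[OF set_integrable_mult_right[OF i1] ic])
          have eq: "KI \<Omega> v0 x s - v0 p * KI \<Omega> (\<lambda>_. 1) x s = (LINT y:\<Omega>|lborel. v0 y / ?K y - v0 p * (1 / ?K y))"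
            unfolding KI_def
            by (subst set_integral_diff(2)[OF i2 set_integrable_mult_right[OF i1]])
               (simp only: set_integral_mult_right)
          have pw: "\<bar>v0 y / ?K y - v0 p * (1 / ?K y)\<bar> \<le> \<epsilon>/2 * (1 / ?K y) + 2 * M * R" if y: "y \<in> \<Omega>" for y
          proof -
            have "norm (x - y) > 0" using dx[OF y] d(1) by linarith
            then have Kpos: "?K y > 0" by simp
            have "\<bar>v0 y / ?K y - v0 p * (1 / ?K y)\<bar> = \<bar>v0 y - v0 p\<bar> * (1 / ?K y)"
              using Kpos by (simp add: field_simps abs_divide)
            also have "\<dots> \<le> \<epsilon>/2 * (1 / ?K y) + 2 * M * R"
            proof (cases "dist y p < \<rho>")
              case True
              then have "\<bar>v0 y - v0 p\<bar> \<le> \<epsilon>/2" using \<rho>(2) y closure_subset by (force simp: dist_real_def)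
              then have "\<bar>v0 y - v0 p\<bar> * (1 / ?K y) \<le> \<epsilon>/2 * (1 / ?K y)" using Kpos by (intro mult_right_mono) auto
              moreover have "0 \<le> 2 * M * R" using M R by simp
              ultimately show ?thesis by linarith
            next
              case False
              have "\<rho> \<le> norm (y - p)" using False by (simp add: dist_norm)
              moreover have "norm (y - p) \<le> norm (x - y) + norm (x - p)"
              proof -
                have "norm (y - p) = norm ((x - p) - (x - y))" by simp
                also have "\<dots> \<le> norm (x - p) + norm (x - y)" by (rule norm_triangle_ineq4)
                finally show ?thesis by simp
              qed
              ultimately have "\<rho>/2 \<le> norm (x - y)" using xp(1) by linarith
              then have kb: "1 / ?K y \<le> R" unfolding R_def using \<rho> s by (intro kernel_bound) auto
              have "\<bar>v0 y - v0 p\<bar> \<le> 2 * M" using Mb[OF y] M(2)[OF pcl] by linarith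
              then have "\<bar>v0 y - v0 p\<bar> * (1 / ?K y) \<le> 2 * M * R" using kb Kpos M by (intro mult_mono) auto
              moreover have "0 \<le> \<epsilon>/2 * (1 / ?K y)" using \<epsilon> Kpos by simp
              ultimately show ?thesis by linarith
            qed
            finally show ?thesis .
          qed
          have "\<bar>KI \<Omega> v0 x s - v0 p * KI \<Omega> (\<lambda>_. 1) x s\<bar> \<le> (LINT y:\<Omega>|lborel. \<bar>v0 y / ?K y - v0 p * (1 / ?K y)\<bar>)"
            unfolding eq using set_integral_norm_bound[OF i3] by simp
          also have "\<dots> \<le> (LINT y:\<Omega>|lborel. \<epsilon>/2 * (1 / ?K y) + 2 * M * R)"
            using i3 i4 pw by (intro set_integral_mono set_integrable_abs) auto
          also have "\<dots> = \<epsilon>/2 * KI \<Omega> (\<lambda>_. 1) x s + C"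
            using Omega_sets Omega_fin
            apply (subst set_integral_add(2)[OF set_integrable_mult_right[OF i1] ic])
            apply (simp only: set_integral_mult_right)
            apply (simp add: set_integral_const KI_def C_def)
            done
          finally show ?thesis .
        qed
        have j1: "set_integrable \<mu> {0<..<1} (\<lambda>s. cNs DIM('n) s * KI \<Omega> (\<lambda>_. 1) x s)"
          by (rule KJ_int[OF x, of _ 1]) auto
        have j2: "set_integrable \<mu> {0<..<1} (\<lambda>s. cNs DIM('n) s * KI \<Omega> v0 x s)"
          by (rule KJ_int[OF x v0_Omega Mb])
        have j3: "set_integrable \<mu> {0<..<1} (\<lambda>s. cNs DIM('n) s * KI \<Omega> v0 x s - v0 p * (cNs DIM('n) s * KI \<Omega> (\<lambda>_. 1) x s))"
          using j1 j2 by (intro set_integral_diff(1) set_integrable_mult_right) auto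
        have j4: "set_integrable \<mu> {0<..<1} (\<lambda>s. \<epsilon>/2 * (cNs DIM('n) s * KI \<Omega> (\<lambda>_. 1) x s) + C * cNs DIM('n) s)"
          using j1 W0_int by (intro set_integral_add(1) set_integrable_mult_right) auto
        have eqo: "Num - v0 p * Den = (LINT s:{0<..<1}|\<mu>. cNs DIM('n) s * KI \<Omega> v0 x s - v0 p * (cNs DIM('n) s * KI \<Omega> (\<lambda>_. 1) x s))"
          unfolding Num_def Den_def KJ_def
          by (subst set_integral_diff(2)[OF j2 set_integrable_mult_right[OF j1]])
             (simp only: set_integral_mult_right)
        have pwo: "\<bar>cNs DIM('n) s * KI \<Omega> v0 x s - v0 p * (cNs DIM('n) s * KI \<Omega> (\<lambda>_. 1) x s)\<bar>
             \<le> \<epsilon>/2 * (cNs DIM('n) s * KI \<Omega> (\<lambda>_. 1) x s) + C * cNs DIM('n) s" if s: "s \<in> {0<..<1}" for s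
        proof -
          have wp: "cNs DIM('n) s > 0" using s cNs_pos[OF DIM_ge1] by auto
          have "\<bar>cNs DIM('n) s * KI \<Omega> v0 x s - v0 p * (cNs DIM('n) s * KI \<Omega> (\<lambda>_. 1) x s)\<bar>
              = cNs DIM('n) s * \<bar>KI \<Omega> v0 x s - v0 p * KI \<Omega> (\<lambda>_. 1) x s\<bar>"
          proof -
            have "cNs DIM('n) s * KI \<Omega> v0 x s - v0 p * (cNs DIM('n) s * KI \<Omega> (\<lambda>_. 1) x s)
                = cNs DIM('n) s * (KI \<Omega> v0 x s - v0 p * KI \<Omega> (\<lambda>_. 1) x s)" by (simp add: algebra_simps)
            then show ?thesis using wp by (simp add: abs_mult)
          qed
          also have "\<dots> \<le> cNs DIM('n) s * (\<epsilon>/2 * KI \<Omega> (\<lambda>_. 1) x s + C)"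
            using wp inner[OF s] by (intro mult_left_mono) auto
          finally show ?thesis by (simp add: algebra_simps)
        qed
        have "\<bar>Num - v0 p * Den\<bar> \<le> (LINT s:{0<..<1}|\<mu>. \<bar>cNs DIM('n) s * KI \<Omega> v0 x s - v0 p * (cNs DIM('n) s * KI \<Omega> (\<lambda>_. 1) x s)\<bar>)"
          unfolding eqo using set_integral_norm_bound[OF j3] by simp
        also have "\<dots> \<le> (LINT s:{0<..<1}|\<mu>. \<epsilon>/2 * (cNs DIM('n) s * KI \<Omega> (\<lambda>_. 1) x s) + C * cNs DIM('n) s)"
          using j3 j4 pwo by (intro set_integral_mono set_integrable_abs) auto
        also have "\<dots> = \<epsilon>/2 * Den + C * W0"
          unfolding Den_def KJ_def W0_def
          using j1 W0_int by (subst set_integral_add(2)) (auto simp: set_integral_mult_right)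
        finally have key: "\<bar>Num - v0 p * Den\<bar> \<le> \<epsilon>/2 * Den + C * W0" .
        have evx: "ext_v \<Omega> \<mu> v0 x = Num / Den" using x by (simp add: ext_v_eq Num_def Den_def)
        have "\<bar>Num / Den - v0 p\<bar> = \<bar>Num - v0 p * Den\<bar> / Den" using Dpos
          by (simp add: field_simps abs_divide)
        also have "\<dots> \<le> (\<epsilon>/2 * Den + C * W0) / Den" using key Dpos by (intro divide_right_mono) auto
        also have "\<dots> = \<epsilon>/2 + C * W0 / Den" using Dpos by (simp add: field_simps)
        also have "C * W0 / Den \<le> C * W0 / (real (Suc n) * c1 * W0)"
          using Den_ge C W0 c1 Dpos by (intro divide_left_mono mult_nonneg_nonneg mult_pos_pos) auto
        also have "\<dots> = C / (real (Suc n) * c1)" using W0 by simp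
        also have "\<dots> < \<epsilon>/2"
        proof -
          have "C < real n * (c1 * (\<epsilon>/2))" using n c1 \<epsilon> by (simp add: divide_less_eq)
          also have "\<dots> \<le> real (Suc n) * (c1 * (\<epsilon>/2))" using c1 \<epsilon> by (intro mult_right_mono) auto
          finally have "C < real (Suc n) * c1 * (\<epsilon>/2)" by (simp add: mult.assoc)
          then show ?thesis using c1 by (simp add: divide_less_eq mult.commute)
        qed
        finally show ?thesis using evx evp by (simp add: dist_real_def)
      qed
    qed
  qed
qed

end


theorem corollary7p1:
  fixes \<Omega> :: "'n::euclidean_space set" and v0 :: "'n \<Rightarrow> real" and \<mu> :: "real measure"
  assumes "sets \<mu> = sets borel"
    and "finite_measure \<mu>"
    and "emeasure \<mu> (UNIV - {0<..<1}) = 0"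
    and "emeasure \<mu> {0<..<1} > 0"
    and "bounded_domain \<Omega>"
    and "C1_boundary \<Omega>"
    and "continuous_on (closure \<Omega>) v0"
  shows "continuous_on UNIV (ext_v \<Omega> \<mu> v0)
       \<and> (\<forall>x\<in>closure \<Omega>. ext_v \<Omega> \<mu> v0 x = v0 x)
       \<and> (\<forall>x. x \<notin> closure \<Omega> \<longrightarrow>
             set_integrable \<mu> {0<..<1} (\<lambda>s. nonlocal_neumann \<Omega> s (ext_v \<Omega> \<mu> v0) x)
           \<and> (LINT s:{0<..<1}|\<mu>. nonlocal_neumann \<Omega> s (ext_v \<Omega> \<mu> v0) x) = 0)"
proof -
  have bdom: "open \<Omega>" "bounded \<Omega>" "\<Omega> \<noteq> {}" using assms(5) by (auto simp: bounded_domain_def)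
  interpret ctx \<Omega> \<mu> v0
    by (rule ctx.intro[OF assms(1) assms(2) assms(4) bdom(1) bdom(2) bdom(3) assms(7)])
  have P2: "\<forall>x\<in>closure \<Omega>. ext_v \<Omega> \<mu> v0 x = v0 x" by (simp add: ext_v_def)
  have P3: "\<forall>x. x \<notin> closure \<Omega> \<longrightarrow>
             set_integrable \<mu> {0<..<1} (\<lambda>s. nonlocal_neumann \<Omega> s (ext_v \<Omega> \<mu> v0) x)
           \<and> (LINT s:{0<..<1}|\<mu>. nonlocal_neumann \<Omega> s (ext_v \<Omega> \<mu> v0) x) = 0"
    using neumann_part by blast
  have P1: "continuous_on UNIV (ext_v \<Omega> \<mu> v0)"
  proof (intro continuous_at_imp_continuous_on ballI)
    fix x :: 'n
    consider (inn) "x \<in> \<Omega>" | (out) "x \<notin> closure \<Omega>" | (bnd) "x \<in> frontier \<Omega>"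
      using bdom(1) by (auto simp: frontier_def interior_open)
    then show "isCont (ext_v \<Omega> \<mu> v0) x"
    proof cases
      case inn
      have cc: "isCont v0 x" using v0_Omega bdom(1) inn continuous_on_eq_continuous_at by blast
      have ev: "\<forall>\<^sub>F y in nhds x. ext_v \<Omega> \<mu> v0 y = v0 y"
        using eventually_nhds_in_open[OF bdom(1) inn]
        by (rule eventually_mono) (use closure_subset in \<open>auto simp: ext_v_def\<close>)
      show ?thesis using isCont_cong[OF ev] cc by simp
    next
      case out
      obtain M where M: "M \<ge> 0" "\<And>y. y \<in> closure \<Omega> \<Longrightarrow> \<bar>v0 y\<bar> \<le> M" using v0_bdd by blast
      have Mb: "\<And>y. y \<in> \<Omega> \<Longrightarrow> \<bar>v0 y\<bar> \<le> M" using M closure_subset by blast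
      have cc: "isCont (\<lambda>y. KJ \<Omega> \<mu> v0 y / KJ \<Omega> \<mu> (\<lambda>_. 1) y) x"
        using KJ_cont[OF out v0_Omega Mb] KJ_cont[OF out continuous_on_const, of 1 1] Den_pos[OF out]
        by (intro isCont_divide) auto
      have ev: "\<forall>\<^sub>F y in nhds x. ext_v \<Omega> \<mu> v0 y = KJ \<Omega> \<mu> v0 y / KJ \<Omega> \<mu> (\<lambda>_. 1) y"
        using eventually_nhds_in_open[OF open_Compl[OF closed_closure], of x \<Omega>] out
        by (auto elim!: eventually_mono simp: ext_v_eq)
      show ?thesis using isCont_cong[OF ev] cc by simp
    next
      case bnd
      obtain r e g Dg where C: "r > 0" "norm e = 1" "\<forall>x. g x = g (x - (x \<bullet> e) *\<^sub>R e)"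
        "\<forall>x. (g has_derivative blinfun_apply (Dg x)) (at x)" "continuous_on UNIV Dg"
        "\<Omega> \<inter> ball x r = {y \<in> ball x r. y \<bullet> e > g y}"
        using assms(6) bnd unfolding C1_boundary_def by blast
      obtain c r0 where cr: "0 < c" "c \<le> 1/4" "0 < r0" "r0 \<le> 1/3"
        "\<And>t. 0 < t \<Longrightarrow> t \<le> r0 \<Longrightarrow> ball (x + t *\<^sub>R e) (c * t) \<subseteq> \<Omega>"
        using cone_balls[OF bdom(1) bnd C] by blast
      show ?thesis by (rule cont_boundary[OF bnd C(2) cr])
    qed
  qed
  show ?thesis using P1 P2 P3 by blast
qed

end
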